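(* Let $\mathcal{H}=(V,E)$ be a linear hypergraph such that for every hyperedge $e\in E$ there exists a vertex $x\in e$ with $\mathrm{deg}_{\mathcal{H}}(x)\le |e|$. Then $$\mathrm{q}(\mathcal{H})\le \Delta([\mathcal{H}]_2)+1.$$
   Context: A hypergraph $\mathcal{H}=(V,E)$ has a finite vertex set $V$ and a finite set $E$ of nonempty subsets of $V$ (hyperedges). It is linear if $|e\cap e'|\le 1$ for all distinct $e,e'\in E$. The degree $\mathrm{deg}_{\mathcal{H}}(x)$ of a vertex $x$ is the number of hyperedges containing $x$. The 2-section $[\mathcal{H}]_2$ is the simple graph on $V$ in which two distinct vertices are adjacent iff some hyperedge contains both; $\Delta([\mathcal{H}]_2)$ is its maximum degree. The chromatic index $\mathrm{q}(\mathcal{H})$ is the least $k$ such that the hyperedges can be colored with $k$ colors so that any two distinct intersecting hyperedges receive different colors. *)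

theory Defs
  imports Main
begin

definition hypergraph :: "'a set \<Rightarrow> 'a set set \<Rightarrow> bool" where
  "hypergraph V E \<longleftrightarrow> finite V \<and> finite E \<and> (\<forall>e\<in>E. e \<noteq> {} \<and> e \<subseteq> V)"

definition linear_hg :: "'a set set \<Rightarrow> bool" where
  "linear_hg E \<longleftrightarrow> (\<forall>e\<in>E. \<forall>e'\<in>E. e \<noteq> e' \<longrightarrow> card (e \<inter> e') \<le> 1)"

definition hdeg :: "'a set set \<Rightarrow> 'a \<Rightarrow> nat" where
  "hdeg E x = card {e\<in>E. x \<in> e}"

definition sec2_nbrs :: "'a set \<Rightarrow> 'a set set \<Rightarrow> 'a \<Rightarrow> 'a set" where
  "sec2_nbrs V E x = {y\<in>V. y \<noteq> x \<and> (\<exists>e\<in>E. x \<in> e \<and> y \<in> e)}"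

definition max_deg_2sec :: "'a set \<Rightarrow> 'a set set \<Rightarrow> nat" where
  "max_deg_2sec V E = Max (insert 0 ((\<lambda>x. card (sec2_nbrs V E x)) ` V))"

definition proper_edge_colouring :: "'a set set \<Rightarrow> nat \<Rightarrow> ('a set \<Rightarrow> nat) \<Rightarrow> bool" where
  "proper_edge_colouring E k c \<longleftrightarrow>
     (\<forall>e\<in>E. c e < k) \<and>
     (\<forall>e\<in>E. \<forall>e'\<in>E. e \<noteq> e' \<and> e \<inter> e' \<noteq> {} \<longrightarrow> c e \<noteq> c e')"

definition chromatic_index :: "'a set set \<Rightarrow> nat" where
  "chromatic_index E = (LEAST k. \<exists>c. proper_edge_colouring E k c)"

end

theory Submission
  imports Defs
begin

lemma single_inter:
  assumes "finite A" "card A \<le> 1" "y \<in> A" shows "A = {y}"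
proof -
  have "card A \<noteq> 0" using assms by auto
  then have "card A = 1" using assms(2) by linarith
  then obtain z where "A = {z}" by (rule card_1_singletonE)
  then show ?thesis using assms(3) by simp
qed

lemma y_bound:
  assumes hg: "hypergraph V E" and lin: "linear_hg E" and eE: "e \<in> E"
    and minc: "\<forall>f\<in>E. card e \<le> card f" and y: "y \<in> e"
  shows "(card e - 1) * (1 + card {f\<in>E. f \<noteq> e \<and> y \<in> f}) \<le> card (sec2_nbrs V E y)"
proof -
  have fV: "finite V" and fE: "finite E" and sub: "\<forall>f\<in>E. f \<noteq> {} \<and> f \<subseteq> V"
    using hg unfolding hypergraph_def by auto
  define F where "F = {f\<in>E. y \<in> f}"
  have F_eq: "F = insert e {f\<in>E. f \<noteq> e \<and> y \<in> f}" using eE y unfolding F_def by auto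
  have fF: "finite F" using fE unfolding F_def by auto
  have cardF: "card F = 1 + card {f\<in>E. f \<noteq> e \<and> y \<in> f}"
    unfolding F_eq using fE by (subst card_insert_disjoint) auto
  have finf0: "\<forall>f\<in>F. finite f"
  proof
    fix f assume "f \<in> F"
    then have "f \<subseteq> V" using sub unfolding F_def by blast
    then show "finite f" using fV by (rule finite_subset)
  qed
  then have finf: "\<forall>f\<in>F. finite (f - {y})" by blast
  have disj: "\<forall>f\<in>F. \<forall>g\<in>F. f \<noteq> g \<longrightarrow> (f - {y}) \<inter> (g - {y}) = {}"
  proof (intro ballI impI)
    fix f g assume f: "f \<in> F" and g: "g \<in> F" and ne: "f \<noteq> g"
    have "card (f \<inter> g) \<le> 1" using lin f g ne unfolding linear_hg_def F_def by auto
    moreover have "finite (f \<inter> g)" using f finf0 by blast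
    moreover have "y \<in> f \<inter> g" using f g unfolding F_def by auto
    ultimately have "f \<inter> g = {y}" by (meson single_inter)
    then show "(f - {y}) \<inter> (g - {y}) = {}" by auto
  qed
  have cu: "card (\<Union>f\<in>F. f - {y}) = (\<Sum>f\<in>F. card (f - {y}))"
    by (rule card_UN_disjoint[OF fF finf disj])
  have "(\<Sum>f\<in>F. card e - 1) \<le> (\<Sum>f\<in>F. card (f - {y}))"
  proof (rule sum_mono)
    fix f assume f: "f \<in> F"
    then have "card e \<le> card f" "y \<in> f" "finite f" using minc finf0 unfolding F_def by auto
    then show "card e - 1 \<le> card (f - {y})" by simp
  qed
  then have "card F * (card e - 1) \<le> card (\<Union>f\<in>F. f - {y})" using cu by simp
  also have "\<dots> \<le> card (sec2_nbrs V E y)"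
  proof (rule card_mono)
    show "finite (sec2_nbrs V E y)" using fV unfolding sec2_nbrs_def by auto
    show "(\<Union>f\<in>F. f - {y}) \<subseteq> sec2_nbrs V E y"
      using sub unfolding F_def sec2_nbrs_def by blast
  qed
  finally show ?thesis using cardF by (simp add: mult.commute)
qed

lemma nbr_bound:
  assumes hg: "hypergraph V E" and lin: "linear_hg E" and eE: "e \<in> E"
    and minc: "\<forall>f\<in>E. card e \<le> card f" and x: "x \<in> e" and hx: "hdeg E x \<le> card e"
    and D: "\<forall>y\<in>V. card (sec2_nbrs V E y) \<le> D"
  shows "card {f\<in>E. f \<noteq> e \<and> f \<inter> e \<noteq> {}} \<le> D"
proof -
  have fV: "finite V" and fE: "finite E" and sub: "\<forall>f\<in>E. f \<noteq> {} \<and> f \<subseteq> V"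
    using hg unfolding hypergraph_def by auto
  have fe: "finite e" using sub eE fV by (meson finite_subset)
  define N where "N y = {f\<in>E. f \<noteq> e \<and> y \<in> f}" for y
  have fN: "finite (N y)" for y using fE unfolding N_def by auto
  have "{f\<in>E. f \<noteq> e \<and> f \<inter> e \<noteq> {}} \<subseteq> N x \<union> (\<Union>y\<in>e-{x}. N y)"
    unfolding N_def by auto
  then have "card {f\<in>E. f \<noteq> e \<and> f \<inter> e \<noteq> {}} \<le> card (N x \<union> (\<Union>y\<in>e-{x}. N y))"
    using fN fe by (intro card_mono) auto
  also have "\<dots> \<le> card (N x) + card (\<Union>y\<in>e-{x}. N y)" by (rule card_Un_le)
  also have "\<dots> \<le> card (N x) + (\<Sum>y\<in>e-{x}. card (N y))"
    using card_UN_le[of "e - {x}" N] fe by simp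
  finally have c1: "card {f\<in>E. f \<noteq> e \<and> f \<inter> e \<noteq> {}} \<le> card (N x) + (\<Sum>y\<in>e-{x}. card (N y))" .
  have "N x = {f\<in>E. x \<in> f} - {e}" unfolding N_def by auto
  then have "card (N x) = hdeg E x - 1" unfolding hdeg_def using fE eE x
    by (simp add: card_Diff_singleton)
  then have cx: "card (N x) \<le> card e - 1" using hx by simp
  have ce: "card (e - {x}) = card e - 1" using x fe by simp
  show ?thesis
  proof (cases "card e = 1")
    case True
    then have "e - {x} = {}" using ce fe by simp
    then show ?thesis using c1 cx True by (simp only: sum.empty)
  next
    case False
    then have s: "card e - 1 > 0" using x fe card_0_eq by fastforce
    have "(\<Sum>y\<in>e-{x}. (card e - 1) * (1 + card (N y))) \<le> (\<Sum>y\<in>e-{x}. D)"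
    proof (rule sum_mono)
      fix y assume "y \<in> e - {x}"
      then have "y \<in> e" "y \<in> V" using sub eE by blast+
      then show "(card e - 1) * (1 + card (N y)) \<le> D"
        using y_bound[OF hg lin eE minc \<open>y \<in> e\<close>] D \<open>y \<in> V\<close> unfolding N_def
        by (meson order_trans)
    qed
    moreover have "(\<Sum>y\<in>e-{x}. (card e - 1) * (1 + card (N y)))
        = (card e - 1) * ((card e - 1) + (\<Sum>y\<in>e-{x}. card (N y)))"
      by (simp only: sum_distrib_left[symmetric] sum.distrib ce card_eq_sum[symmetric])
    moreover have "(\<Sum>y\<in>e-{x}. D) = (card e - 1) * D" using ce by simp
    ultimately have "(card e - 1) * ((card e - 1) + (\<Sum>y\<in>e-{x}. card (N y))) \<le> (card e - 1) * D"
      by linarith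
    then have "(card e - 1) + (\<Sum>y\<in>e-{x}. card (N y)) \<le> D" using s by simp
    then show ?thesis using c1 cx by simp
  qed
qed

lemma colouring_exists:
  "card E = n \<Longrightarrow> hypergraph V E \<Longrightarrow> linear_hg E \<Longrightarrow> \<forall>e\<in>E. \<exists>x\<in>e. hdeg E x \<le> card e
   \<Longrightarrow> \<forall>y\<in>V. card (sec2_nbrs V E y) \<le> D \<Longrightarrow> \<exists>c. proper_edge_colouring E (D + 1) c"
proof (induction n arbitrary: E)
  case 0
  then have "E = {}" unfolding hypergraph_def by auto
  then show ?case unfolding proper_edge_colouring_def by auto
next
  case (Suc n)
  have fV: "finite V" and fE: "finite E" and sub: "\<forall>f\<in>E. f \<noteq> {} \<and> f \<subseteq> V"
    using Suc.prems(2) unfolding hypergraph_def by auto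
  have ne: "E \<noteq> {}" using Suc.prems(1) by auto
  obtain e where eE: "e \<in> E" and minc: "\<forall>f\<in>E. card e \<le> card f"
    using ex_min_if_finite[of "card ` E"] fE ne
    by (metis (mono_tags, lifting) arg_min_if_finite(1) arg_min_if_finite(2) not_le)
  obtain x where x: "x \<in> e" "hdeg E x \<le> card e" using Suc.prems(4) eE by auto
  define E' where "E' = E - {e}"
  have cE': "card E' = n" using Suc.prems(1) eE fE unfolding E'_def by simp
  have hg': "hypergraph V E'" using Suc.prems(2) unfolding hypergraph_def E'_def by auto
  have lin': "linear_hg E'" using Suc.prems(3) unfolding linear_hg_def E'_def by auto
  have hd: "hdeg E' z \<le> hdeg E z" for z
    unfolding hdeg_def E'_def using fE by (intro card_mono) auto
  have cond': "\<forall>f\<in>E'. \<exists>z\<in>f. hdeg E' z \<le> card f"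
    using Suc.prems(4) hd unfolding E'_def by (meson DiffD1 order_trans)
  have D': "\<forall>y\<in>V. card (sec2_nbrs V E' y) \<le> D"
  proof
    fix y assume y: "y \<in> V"
    have "card (sec2_nbrs V E' y) \<le> card (sec2_nbrs V E y)"
      using fV unfolding sec2_nbrs_def E'_def by (intro card_mono) auto
    then show "card (sec2_nbrs V E' y) \<le> D" using Suc.prems(5) y by (meson order_trans)
  qed
  obtain c where c: "proper_edge_colouring E' (D + 1) c"
    using Suc.IH[OF cE' hg' lin' cond' D'] by blast
  define N where "N = {f\<in>E. f \<noteq> e \<and> f \<inter> e \<noteq> {}}"
  have cN: "card N \<le> D" unfolding N_def
    by (rule nbr_bound[OF Suc.prems(2) Suc.prems(3) eE minc x Suc.prems(5)])
  have fN: "finite N" using fE unfolding N_def by simp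
  have "card (c ` N) \<le> D" using cN card_image_le[OF fN, of c] by linarith
  then have "\<not> {0..<D+1} \<subseteq> c ` N"
  proof (intro notI)
    assume "card (c ` N) \<le> D" "{0..<D+1} \<subseteq> c ` N"
    then have "card {0..<D+1} \<le> card (c ` N)" using fN by (intro card_mono) simp_all
    then show False using \<open>card (c ` N) \<le> D\<close> by simp
  qed
  then obtain k0 where k0: "k0 \<in> {0..<D+1}" "k0 \<notin> c ` N" by blast
  then obtain k where k: "k < D + 1" "k \<notin> c ` N" by auto
  define c' where "c' = c(e := k)"
  have "proper_edge_colouring E (D + 1) c'"
    unfolding proper_edge_colouring_def
  proof (intro conjI ballI impI)
    fix f assume "f \<in> E"
    then show "c' f < D + 1" using c k unfolding c'_def proper_edge_colouring_def E'_def by auto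
  next
    fix f g assume f: "f \<in> E" and g: "g \<in> E" and h: "f \<noteq> g \<and> f \<inter> g \<noteq> {}"
    show "c' f \<noteq> c' g"
    proof (cases "f = e")
      case True
      then have "g \<in> N" using g h unfolding N_def by auto
      then show ?thesis using True h k unfolding c'_def by auto
    next
      case False
      show ?thesis
      proof (cases "g = e")
        case True
        then have "f \<in> N" using f h False unfolding N_def by auto
        then show ?thesis using True False k unfolding c'_def by force
      next
        case False2: False
        then show ?thesis using c f g h False unfolding c'_def proper_edge_colouring_def E'_def by auto
      qed
    qed
  qed
  then show ?case by blast
qed

theorem theorem1p5:
  fixes V :: "'a set" and E :: "'a set set"
  assumes "hypergraph V E"
    and "linear_hg E"
    and "\<forall>e\<in>E. \<exists>x\<in>e. hdeg E x \<le> card e"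
  shows "chromatic_index E \<le> max_deg_2sec V E + 1"
proof -
  have fV: "finite V" using assms(1) unfolding hypergraph_def by auto
  have "\<forall>y\<in>V. card (sec2_nbrs V E y) \<le> max_deg_2sec V E"
    unfolding max_deg_2sec_def using fV by (intro ballI Max_ge) auto
  then obtain c where "proper_edge_colouring E (max_deg_2sec V E + 1) c"
    using colouring_exists[OF refl assms] by blast
  then show ?thesis unfolding chromatic_index_def by (intro Least_le) blast
qed

end
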